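(* Let $n>1$ be an integer with $F_n=D_n$ such that $n+1$ is prime. Then for every integer $k\ge0$, the integer $m=n(n+1)^k$ satisfies $F_m=D_m$.
   Context: For a composite integer $m$, let $d(m)$ denote the largest divisor of $m$ with $1<d(m)<m$. Define $f$ on integers $m>1$ by $f(m)=m-1$ if $m$ is prime and $f(m)=m-d(m)$ if $m$ is composite. Let $f^{(0)}(m)=m$, $f^{(i)}=f\circ f^{(i-1)}$. Define $F_m=\{m,f(m),f^{(2)}(m),\dots,1\}$, the set of iterates of $f$ from $m$ up to and including the first occurrence of $1$, and let $D_m$ be the set of positive divisors of $m$. *)

theory Defs
  imports "HOL-Computational_Algebra.Primes"
begin

text \<open>Largest divisor d of m with 1 < d < m (meaningful for composite m).\<close>
definition dmax :: "nat \<Rightarrow> nat" where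
  "dmax m = Max {d. d dvd m \<and> 1 < d \<and> d < m}"

definition fstep :: "nat \<Rightarrow> nat" where
  "fstep m = (if prime m then m - 1 else m - dmax m)"

text \<open>F_m: the iterates of f starting from m, up to and including the first occurrence of 1.\<close>
definition Fset :: "nat \<Rightarrow> nat set" where
  "Fset m = {(fstep ^^ i) m | i. \<forall>j<i. (fstep ^^ j) m \<noteq> 1}"

definition Dset :: "nat \<Rightarrow> nat set" where
  "Dset m = {d. d dvd m \<and> 0 < d}"

end

theory Submission
  imports Defs
begin

lemma Fset_1: "Fset 1 = {1}"
proof -
  have "(fstep ^^ i) 1 \<in> {1}" if "\<forall>j<i. (fstep ^^ j) 1 \<noteq> 1" for i
    using that by (cases i) auto
  moreover have "1 \<in> Fset 1" unfolding Fset_def by (auto intro: exI[of _ 0])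
  ultimately show ?thesis unfolding Fset_def by blast
qed

lemma Fset_step: assumes "m \<noteq> 1" shows "Fset m = insert m (Fset (fstep m))"
proof
  show "Fset m \<subseteq> insert m (Fset (fstep m))"
  proof
    fix x assume "x \<in> Fset m"
    then obtain i where x: "x = (fstep ^^ i) m" and c: "\<forall>j<i. (fstep ^^ j) m \<noteq> 1"
      unfolding Fset_def by blast
    show "x \<in> insert m (Fset (fstep m))"
    proof (cases i)
      case 0 then show ?thesis using x by simp
    next
      case (Suc i')
      have "x = (fstep ^^ i') (fstep m)" using x Suc by (simp only: funpow_Suc_right o_apply)
      moreover have "\<forall>j<i'. (fstep ^^ j) (fstep m) \<noteq> 1"
      proof (intro allI impI)
        fix j assume "j < i'"
        then have "Suc j < i" using Suc by simp
        then have "(fstep ^^ Suc j) m \<noteq> 1" using c by blast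
        then show "(fstep ^^ j) (fstep m) \<noteq> 1" by (simp only: funpow_Suc_right o_apply not_False_eq_True)
      qed
      ultimately show ?thesis unfolding Fset_def by blast
    qed
  qed
next
  show "insert m (Fset (fstep m)) \<subseteq> Fset m"
  proof
    fix x assume "x \<in> insert m (Fset (fstep m))"
    then show "x \<in> Fset m"
    proof
      assume "x = m" then show ?thesis unfolding Fset_def by (auto intro!: exI[of _ 0])
    next
      assume "x \<in> Fset (fstep m)"
      then obtain i where x: "x = (fstep ^^ i) (fstep m)" and c: "\<forall>j<i. (fstep ^^ j) (fstep m) \<noteq> 1"
        unfolding Fset_def by blast
      have "x = (fstep ^^ Suc i) m" using x by (simp only: funpow_Suc_right o_apply)
      moreover have "\<forall>j<Suc i. (fstep ^^ j) m \<noteq> 1"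
      proof (intro allI impI)
        fix j assume "j < Suc i"
        then show "(fstep ^^ j) m \<noteq> 1" using c assms
          by (cases j) (auto simp del: funpow.simps simp add: funpow_Suc_right)
      qed
      ultimately show ?thesis unfolding Fset_def by blast
    qed
  qed
qed

lemma Fset_closed: assumes "y \<in> Fset M" "y \<noteq> 1" shows "fstep y \<in> Fset M"
proof -
  obtain i where y: "y = (fstep ^^ i) M" and c: "\<forall>j<i. (fstep ^^ j) M \<noteq> 1"
    using assms(1) unfolding Fset_def by blast
  have "fstep y = (fstep ^^ Suc i) M" using y by simp
  moreover have "\<forall>j<Suc i. (fstep ^^ j) M \<noteq> 1" using c assms(2) y less_Suc_eq by auto
  ultimately have "\<exists>i'. fstep y = (fstep ^^ i') M \<and> (\<forall>j<i'. (fstep ^^ j) M \<noteq> 1)" by blast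
  then show ?thesis unfolding Fset_def by simp
qed

lemma dmax_eq:
  assumes "prime q" "q dvd m" "\<forall>r. prime r \<and> r dvd m \<longrightarrow> q \<le> r" "\<not> prime m" "m > 1"
  shows "dmax m = m div q"
proof -
  let ?S = "{d. d dvd m \<and> 1 < d \<and> d < m}"
  have fin: "finite ?S" by (rule finite_subset[of _ "{..m}"]) auto
  obtain t where t: "m = q * t" using assms(2) by blast
  have q1: "q > 1" using assms(1) prime_gt_1_nat by blast
  have tm: "t = m div q" using t q1 by simp
  have "t \<noteq> 1" using t assms(1,4) by auto
  moreover have "t \<noteq> 0"
  proof
    assume "t = 0" then have "m = 0" using t by simp
    then show False using assms(5) by simp
  qed
  ultimately have t1: "t > 1" by simp
  have "1 * t < q * t" using q1 t1 by (intro mult_strict_right_mono) auto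
  then have "t < m" using t by (simp only: mult_1)
  have "t dvd m" using t by simp
  then have mem: "m div q \<in> ?S" using t1 \<open>t < m\<close> tm by blast
  have le: "d \<le> m div q" if dS: "d \<in> ?S" for d
  proof -
    obtain e where e: "m = d * e" using dS by blast
    have "e \<noteq> 1" using e dS by auto
    moreover have "e \<noteq> 0"
    proof
      assume "e = 0" then have "m = 0" using e by simp
      then show False using assms(5) by simp
    qed
    ultimately obtain r where r: "prime r" "r dvd e" using prime_factor_nat by blast
    have "r dvd m" using r e by simp
    then have "q \<le> r" using assms(3) r by blast
    moreover have "r \<le> e" using r \<open>e \<noteq> 0\<close> by (simp add: dvd_imp_le)
    ultimately have "q \<le> e" by simp
    then have "m div e \<le> m div q" using q1 by (simp add: div_le_mono2)
    moreover have "m div e = d" using e \<open>e \<noteq> 0\<close> by simp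
    ultimately show ?thesis by simp
  qed
  show ?thesis unfolding dmax_def by (rule Max_eqI[OF fin le mem])
qed

lemma min_prime:
  fixes y :: nat assumes "y > 1"
  obtains q where "prime q" "q dvd y" "\<forall>r. prime r \<and> r dvd y \<longrightarrow> q \<le> r"
proof -
  have ex: "\<exists>q. prime q \<and> q dvd y" using assms prime_factor_nat by (metis less_irrefl)
  define q where "q = (LEAST q. prime q \<and> q dvd y)"
  have "prime q \<and> q dvd y" unfolding q_def using LeastI_ex[OF ex] .
  moreover have "\<forall>r. prime r \<and> r dvd y \<longrightarrow> q \<le> r" unfolding q_def by (auto intro: Least_le)
  ultimately show ?thesis using that by blast
qed

lemma fstep_formula:
  fixes y q :: nat
  assumes "y > 1" "prime q" "q dvd y" "\<forall>r. prime r \<and> r dvd y \<longrightarrow> q \<le> r"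
  shows "fstep y = y - y div q"
proof (cases "prime y")
  case True
  have "q = y" using primes_dvd_imp_eq[OF assms(2) True assms(3)] .
  then show ?thesis using True assms by (simp add: fstep_def)
next
  case False
  then show ?thesis using dmax_eq[OF assms(2,3,4) False assms(1)] by (simp add: fstep_def)
qed

lemma fstep_mult:
  fixes p y :: nat
  assumes "prime p" "y > 1" "\<forall>r. prime r \<and> r dvd y \<longrightarrow> r \<le> p"
  shows "fstep (p * y) = p * fstep y" and "fstep y < y"
proof -
  obtain q where q: "prime q" "q dvd y" "\<forall>r. prime r \<and> r dvd y \<longrightarrow> q \<le> r"
    using min_prime[OF assms(2)] by blast
  have qp: "q \<le> p" using q assms(3) by blast
  have p1: "p > 1" using assms(1) prime_gt_1_nat by blast
  have q2: "\<forall>r. prime r \<and> r dvd p * y \<longrightarrow> q \<le> r"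
  proof (intro allI impI)
    fix r assume r: "prime r \<and> r dvd p * y"
    then have "r dvd p \<or> r dvd y" using prime_dvd_multD[of r p y] by simp
    then show "q \<le> r"
    proof
      assume "r dvd p" then have "r = p" using r assms(1) using primes_dvd_imp_eq[of r p] by blast
      then show ?thesis using qp by simp
    qed (use r q in blast)
  qed
  have "p * y > 1" using p1 assms(2) by (metis less_1_mult)
  have fy: "fstep y = y - y div q" using fstep_formula[OF assms(2) q] .
  have qpy: "q dvd p*y" using q(2) by simp
  have "fstep (p*y) = p*y - p*y div q" using fstep_formula[OF \<open>p*y>1\<close> q(1) qpy q2] .
  also have "p*y div q = p * (y div q)" using div_mult_swap[OF q(2), of p] by simp
  finally show "fstep (p * y) = p * fstep y" using fy by (simp add: diff_mult_distrib2)
  have "q \<le> y" using q(2) assms(2) dvd_imp_le by simp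
  then have "y div q > 0" using prime_gt_0_nat[OF q(1)] by (simp add: div_greater_zero_iff)
  then show "fstep y < y" using fy assms(2) by simp
qed

lemma key:
  fixes n p M :: nat
  assumes "prime p" "p = n + 1" "Fset M = Dset M"
    "\<forall>r. prime r \<and> r dvd M \<longrightarrow> r \<le> p" "M > 0"
  shows "y dvd M \<Longrightarrow> Fset (p * y) = (\<lambda>z. p * z) ` Fset y \<union> Fset n"
proof (induction y rule: less_induct)
  case (less y)
  have p1: "p > 1" using assms(1) prime_gt_1_nat by blast
  have y0: "y > 0" using less.prems assms(5) by (metis dvd_0_left_iff gr0I less_irrefl)
  show ?case
  proof (cases "y = 1")
    case True
    have "fstep p = n" using assms(1,2) by (simp add: fstep_def)
    then have "Fset p = insert p (Fset n)" using Fset_step[of p] p1 by simp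
    then show ?thesis using True Fset_1 by simp
  next
    case False
    then have y1: "y > 1" using y0 by simp
    have pf: "\<forall>r. prime r \<and> r dvd y \<longrightarrow> r \<le> p" using assms(4) less.prems dvd_trans by blast
    have fm: "fstep (p*y) = p * fstep y" and lt: "fstep y < y" using fstep_mult[OF assms(1) y1 pf] by auto
    have "y \<in> Fset M" using assms(3) less.prems y0 by (simp add: Dset_def)
    then have "fstep y \<in> Fset M" using Fset_closed False by blast
    then have fd: "fstep y dvd M" using assms(3) by (simp add: Dset_def)
    have "p * y \<noteq> 1" using p1 y1 by simp
    then have "Fset (p*y) = insert (p*y) (Fset (p * fstep y))" using Fset_step fm by metis
    also have "\<dots> = insert (p*y) ((\<lambda>z. p * z) ` Fset (fstep y) \<union> Fset n)" using less.IH[OF lt fd] by simp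
    also have "\<dots> = (\<lambda>z. p * z) ` Fset y \<union> Fset n" using Fset_step[OF False] by simp
    finally show ?thesis .
  qed
qed

lemma Dset_mult:
  fixes n p M :: nat
  assumes "prime p" "\<not> p dvd n" "M = n * p ^ k" "n > 0"
  shows "Dset (p * M) = (\<lambda>z. p * z) ` Dset M \<union> Dset n"
proof
  show "Dset (p * M) \<subseteq> (\<lambda>z. p * z) ` Dset M \<union> Dset n"
  proof
    fix d assume d: "d \<in> Dset (p * M)"
    show "d \<in> (\<lambda>z. p * z) ` Dset M \<union> Dset n"
    proof (cases "p dvd d")
      case True
      then obtain e where e: "d = p * e" by blast
      have "e dvd M" using d e assms(1) by (auto simp: Dset_def prime_gt_0_nat)
      moreover have "e > 0" using d e by (simp add: Dset_def)
      ultimately show ?thesis using e by (auto simp: Dset_def)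
    next
      case False
      then have "coprime d p" using assms(1) by (metis coprime_commute prime_imp_coprime)
      then have "coprime d (p ^ Suc k)" by simp
      moreover have "d dvd n * p ^ Suc k" using d assms(3) by (simp add: Dset_def mult.commute mult.left_commute)
      ultimately have "d dvd n" using coprime_dvd_mult_left_iff by blast
      then show ?thesis using d by (simp add: Dset_def)
    qed
  qed
next
  have "p > 0" using assms(1) prime_gt_0_nat by blast
  moreover have "n dvd p * M" using assms(3) by simp
  ultimately show "(\<lambda>z. p * z) ` Dset M \<union> Dset n \<subseteq> Dset (p * M)"
  proof (intro subsetI)
    fix d assume d: "d \<in> (\<lambda>z. p * z) ` Dset M \<union> Dset n"
    show "d \<in> Dset (p * M)"
    proof (cases "d \<in> Dset n")
      case True
      then have "d dvd n" "d > 0" by (auto simp: Dset_def)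
      then show ?thesis using \<open>n dvd p * M\<close> dvd_trans unfolding Dset_def by blast
    next
      case False
      then obtain e where e: "d = p * e" "e \<in> Dset M" using d by blast
      then have "e dvd M" "e > 0" by (auto simp: Dset_def)
      then have "p * e dvd p * M" "p * e > 0" using \<open>p > 0\<close> by auto
      then show ?thesis using e unfolding Dset_def by blast
    qed
  qed
qed

theorem proposition5:
  fixes n :: nat
  assumes "n > 1" and "Fset n = Dset n" and "prime (n + 1)"
  shows "\<forall>k::nat. Fset (n * (n + 1) ^ k) = Dset (n * (n + 1) ^ k)"
proof
  fix k
  define p where "p = n + 1"
  have pp: "prime p" using assms(3) p_def by simp
  have ndvd: "\<not> p dvd n"
  proof
    assume "p dvd n" then have "p \<le> n" using assms(1) by (simp add: dvd_imp_le)
    then show False using p_def by simp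
  qed
  show "Fset (n * (n + 1) ^ k) = Dset (n * (n + 1) ^ k)"
    unfolding p_def[symmetric]
  proof (induction k)
    case 0 then show ?case using assms(2) by simp
  next
    case (Suc k)
    define M where "M = n * p ^ k"
    have M0: "M > 0" using M_def assms(1) pp prime_gt_0_nat by simp
    have pf: "\<forall>r. prime r \<and> r dvd M \<longrightarrow> r \<le> p"
    proof (intro allI impI)
      fix r assume r: "prime r \<and> r dvd M"
      then have "r dvd n \<or> r dvd p ^ k" using M_def prime_dvd_multD[of r n "p^k"] by simp
      then show "r \<le> p"
      proof
        assume "r dvd n" then have "r \<le> n" using assms(1) dvd_imp_le by simp
        then show ?thesis using p_def by simp
      next
        assume "r dvd p ^ k" then have "r dvd p" using r prime_dvd_power by blast
        then show ?thesis using pp dvd_imp_le prime_gt_0_nat by blast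
      qed
    qed
    have "Fset (p * M) = (\<lambda>z. p * z) ` Fset M \<union> Fset n"
      using key[OF pp p_def _ pf M0, of M] Suc M_def by simp
    also have "\<dots> = (\<lambda>z. p * z) ` Dset M \<union> Dset n" using Suc M_def assms(2) by simp
    also have "\<dots> = Dset (p * M)" using Dset_mult[OF pp ndvd M_def] assms(1) by simp
    finally show ?case using M_def by (simp add: mult.commute mult.left_commute)
  qed
qed

end
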